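(* If RePair and MR-RePair are not run with the same MR-order, then there is a case (i.e., there exist a text $T$ and runs of the two algorithms on $T$) in which the size of the grammar generated by MR-RePair is larger than the size of the grammar generated by RePair.
   Context: Strings: $\Sigma$ is a finite ordered alphabet; the frequency of a string is its number of occurrences in the current text as a substring. A substring $s$ with frequency greater than 1 is a repeat; $s$ is a maximal repeat if $|s|\ge 2$, $s$ is a repeat, and every left extension $ws$ and every right extension $sw$ ($w$ nonempty) occurs strictly fewer times than $s$. Grammars: a (deterministic) grammar $G=\{V,\Sigma,S,R\}$ has exactly one rule $v\to \mathit{expr}$ per variable, $\mathit{expr}$ being either a symbol of $\Sigma$ or a string of previously defined variables; it derives a unique text. Its size is the total length of the right-hand sides of all its rules. RePair on text $T$: (1) replace each symbol $a$ by a new variable $v_a$ and add $v_a\to a$; (2) find a most frequent pair $p$ of the current text (ties broken arbitrarily); (3) replace every occurrence of $p$ (as many as possible when $p$ consists of two equal symbols) by a new variable $v$ and add $v\to p$; (4) if the maximum pair frequency is now 1, add $S\to$(current text) and stop, else go to (2). MR-RePair on text $T$: (1) as in RePair; (2) find a most frequent maximal repeat $r$ of the current text (ties broken arbitrarily); (3) if $|r|>2$ and $r[1]=r[|r|]$, replace $r$ by $r[2..|r|]$; (4) replace every occurrence of $r$ by a new variable $v$ and add $v\to r$; (5) if the maximum frequency of maximal repeats is now 1, add $S\to$(current text) and stop, else go to (2). MR-order: the tie-breaking choices determine, for each run, an order in which the most frequent maximal repeats at each frequency level are processed (RePair replaces consecutively the pairs lying inside a most frequent maximal repeat); this order is the MR-order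 of the run. *)

theory Defs
  imports Main
begin

text \<open>Texts are lists of symbols (natural numbers). A grammar state is a list of
  rules (variable i has right-hand side R!i) together with the current text,
  which is a list of variables.\<close>

datatype rhs = Term nat | NT "nat list"

type_synonym state = "rhs list \<times> nat list"

definition freq :: "nat list \<Rightarrow> nat list \<Rightarrow> nat" where
  "freq s w = card {i. i + length s \<le> length w \<and> take (length s) (drop i w) = s}"

definition is_maxrep :: "nat list \<Rightarrow> nat list \<Rightarrow> bool" where
  "is_maxrep r w \<longleftrightarrow> length r \<ge> 2 \<and> freq r w > 1 \<and>
     (\<forall>u. u \<noteq> [] \<longrightarrow> freq (u @ r) w < freq r w \<and> freq (r @ u) w < freq r w)"

text \<open>Left-to-right greedy replacement of all (non-overlapping) occurrences of r by v.\<close>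
function repl :: "nat list \<Rightarrow> nat \<Rightarrow> nat list \<Rightarrow> nat list" where
  "repl r v [] = []"
| "repl r v (x # xs) =
     (if r \<noteq> [] \<and> take (length r) (x # xs) = r
      then v # repl r v (drop (length r - 1) xs)
      else x # repl r v xs)"
  by pat_completeness auto
termination by (relation "measure (\<lambda>(r, v, w). length w)") auto

text \<open>Expansion of variables into terminal strings (fuel = number of rules).\<close>
fun expv :: "nat \<Rightarrow> rhs list \<Rightarrow> nat \<Rightarrow> nat list" where
  "expv 0 R v = []"
| "expv (Suc n) R v =
     (if v < length R then (case R ! v of Term a \<Rightarrow> [a] | NT vs \<Rightarrow> concat (map (expv n R) vs))
      else [])"

definition expand :: "rhs list \<Rightarrow> nat list \<Rightarrow> nat list" where
  "expand R w = concat (map (expv (length R) R) w)"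

fun rhs_len :: "rhs \<Rightarrow> nat" where
  "rhs_len (Term a) = 1"
| "rhs_len (NT vs) = length vs"

text \<open>Size of the grammar: rules for all variables plus the start rule S \<rightarrow> current text.\<close>
definition gsize :: "state \<Rightarrow> nat" where
  "gsize s = sum_list (map rhs_len (fst s)) + length (snd s)"

fun pos :: "nat list \<Rightarrow> nat \<Rightarrow> nat" where
  "pos [] a = 0"
| "pos (x # xs) a = (if x = a then 0 else Suc (pos xs a))"

definition init :: "nat list \<Rightarrow> state" where
  "init T = (map Term (remdups T), map (pos (remdups T)) T)"

text \<open>Generic runs: a run is the list of choices made in step (2).\<close>
fun run_valid :: "(state \<Rightarrow> nat list \<Rightarrow> bool) \<Rightarrow> (state \<Rightarrow> nat list \<Rightarrow> state) \<Rightarrow>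
    (state \<Rightarrow> bool) \<Rightarrow> state \<Rightarrow> nat list list \<Rightarrow> bool" where
  "run_valid ok nxt done s [] = done s"
| "run_valid ok nxt done s (c # cs) = (ok s c \<and> run_valid ok nxt done (nxt s c) cs)"

fun run_final :: "(state \<Rightarrow> nat list \<Rightarrow> state) \<Rightarrow> state \<Rightarrow> nat list list \<Rightarrow> state" where
  "run_final nxt s [] = s"
| "run_final nxt s (c # cs) = run_final nxt (nxt s c) cs"

definition rp_ok :: "state \<Rightarrow> nat list \<Rightarrow> bool" where
  "rp_ok s p \<longleftrightarrow> length p = 2 \<and> freq p (snd s) \<ge> 2 \<and>
     (\<forall>q. length q = 2 \<longrightarrow> freq q (snd s) \<le> freq p (snd s))"

definition rp_next :: "state \<Rightarrow> nat list \<Rightarrow> state" where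
  "rp_next s p = (fst s @ [NT p], repl p (length (fst s)) (snd s))"

definition rp_done :: "state \<Rightarrow> bool" where
  "rp_done s \<longleftrightarrow> (\<forall>q. length q = 2 \<longrightarrow> freq q (snd s) \<le> 1)"

definition repair_run :: "nat list \<Rightarrow> nat list list \<Rightarrow> bool" where
  "repair_run T ps = run_valid rp_ok rp_next rp_done (init T) ps"

definition repair_grammar :: "nat list \<Rightarrow> nat list list \<Rightarrow> state" where
  "repair_grammar T ps = run_final rp_next (init T) ps"

definition mr_ok :: "state \<Rightarrow> nat list \<Rightarrow> bool" where
  "mr_ok s r \<longleftrightarrow> is_maxrep r (snd s) \<and>
     (\<forall>r'. is_maxrep r' (snd s) \<longrightarrow> freq r' (snd s) \<le> freq r (snd s))"

definition mr_trim :: "nat list \<Rightarrow> nat list" where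
  "mr_trim r = (if length r > 2 \<and> hd r = last r then tl r else r)"

definition mr_next :: "state \<Rightarrow> nat list \<Rightarrow> state" where
  "mr_next s r = (fst s @ [NT (mr_trim r)], repl (mr_trim r) (length (fst s)) (snd s))"

definition mr_done :: "state \<Rightarrow> bool" where
  "mr_done s \<longleftrightarrow> (\<forall>r. \<not> is_maxrep r (snd s))"

definition mrrepair_run :: "nat list \<Rightarrow> nat list list \<Rightarrow> bool" where
  "mrrepair_run T rs = run_valid mr_ok mr_next mr_done (init T) rs"

definition mrrepair_grammar :: "nat list \<Rightarrow> nat list list \<Rightarrow> state" where
  "mrrepair_grammar T rs = run_final mr_next (init T) rs"

fun mr_seq :: "state \<Rightarrow> nat list list \<Rightarrow> nat list list" where
  "mr_seq s [] = []"
| "mr_seq s (r # rs) = expand (fst s) r # mr_seq (mr_next s r) rs"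

definition mrrepair_order :: "nat list \<Rightarrow> nat list list \<Rightarrow> nat list list" where
  "mrrepair_order T rs = remdups_adj (mr_seq (init T) rs)"

text \<open>The most frequent maximal repeat(s) inside which RePair's chosen pair lies.\<close>
definition rp_cands :: "state \<Rightarrow> nat list \<Rightarrow> nat list set" where
  "rp_cands s p = {expand (fst s) r | r. is_maxrep r (snd s) \<and> freq r (snd s) = freq p (snd s)
                     \<and> (\<exists>u v. r = u @ p @ v)}"

fun rp_seqs :: "state \<Rightarrow> nat list list \<Rightarrow> nat list list set" where
  "rp_seqs s [] = {[]}"
| "rp_seqs s (p # ps) = {x # xs | x xs. x \<in> rp_cands s p \<and> xs \<in> rp_seqs (rp_next s p) ps}"

definition repair_orders :: "nat list \<Rightarrow> nat list list \<Rightarrow> nat list list set" where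
  "repair_orders T ps = remdups_adj ` rp_seqs (init T) ps"

end

theory Submission
  imports Defs
begin

definition subs :: "nat list \<Rightarrow> nat list list" where
  "subs w = concat (map (\<lambda>i. map (\<lambda>l. take l (drop i w)) [0..<Suc (length w)]) [0..<Suc (length w)])"

lemma freq_code:
  "freq s w = length (filter (\<lambda>i. i + length s \<le> length w \<and> take (length s) (drop i w) = s) [0..<Suc (length w)])"
proof -
  let ?P = "\<lambda>i. i + length s \<le> length w \<and> take (length s) (drop i w) = s"
  have "{i. ?P i} = set (filter ?P [0..<Suc (length w)])" by (auto simp del: upt_Suc)
  then show ?thesis unfolding freq_def
    by (metis (no_types, lifting) distinct_card distinct_filter distinct_upt)
qed

lemma in_subs: "w = ps @ x @ ss \<Longrightarrow> x \<in> set (subs w)"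
  unfolding subs_def by (auto intro!: bexI[of _ "length ps"] image_eqI[of _ _ "length x"])

lemma subs_split: assumes "x \<in> set (subs w)" shows "\<exists>ps ss. w = ps @ x @ ss"
proof -
  from assms have "\<exists>i l. x = take l (drop i w)" unfolding subs_def by (auto simp del: upt_Suc)
  then obtain i l where "x = take l (drop i w)" by blast
  moreover have "w = take i w @ take l (drop i w) @ drop l (drop i w)"
    by (metis append_take_drop_id)
  ultimately show ?thesis by blast
qed

lemma freq_pos_split: "0 < freq x w \<Longrightarrow> \<exists>ps ss. w = ps @ x @ ss"
proof -
  assume "0 < freq x w"
  then have "{i. i + length x \<le> length w \<and> take (length x) (drop i w) = x} \<noteq> {}"
    unfolding freq_def by (metis card.empty less_irrefl)
  then obtain i where i: "i + length x \<le> length w" "take (length x) (drop i w) = x" by auto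
  have "w = take i w @ take (length x) (drop i w) @ drop (length x) (drop i w)"
    by (metis append_take_drop_id)
  then show ?thesis using i by metis
qed

lemma freq_pos_subs: "0 < freq x w \<Longrightarrow> x \<in> set (subs w)"
  using freq_pos_split in_subs by blast

lemma sub_iff: "(\<exists>u v. r = u @ p @ v) \<longleftrightarrow> p \<in> set (subs r)"
  using in_subs subs_split by blast

lemma is_maxrep_code:
  "is_maxrep r w \<longleftrightarrow> length r \<ge> 2 \<and> freq r w > 1 \<and>
     (\<forall>u\<in>set (subs w). u \<noteq> [] \<longrightarrow> freq (u @ r) w < freq r w \<and> freq (r @ u) w < freq r w)"
proof
  assume "is_maxrep r w" then show "length r \<ge> 2 \<and> freq r w > 1 \<and>
     (\<forall>u\<in>set (subs w). u \<noteq> [] \<longrightarrow> freq (u @ r) w < freq r w \<and> freq (r @ u) w < freq r w)"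
    unfolding is_maxrep_def by blast
next
  assume A: "length r \<ge> 2 \<and> freq r w > 1 \<and>
     (\<forall>u\<in>set (subs w). u \<noteq> [] \<longrightarrow> freq (u @ r) w < freq r w \<and> freq (r @ u) w < freq r w)"
  show "is_maxrep r w" unfolding is_maxrep_def
  proof (intro conjI allI impI)
    fix u :: "nat list" assume u: "u \<noteq> []"
    show "freq (u @ r) w < freq r w"
    proof (cases "freq (u @ r) w = 0")
      case True then show ?thesis using A by simp
    next
      case False
      from freq_pos_split[of "u @ r" w] False obtain ps ss where "w = ps @ (u @ r) @ ss" by auto
      then have "w = ps @ u @ (r @ ss)" by simp
      then have "u \<in> set (subs w)" by (rule in_subs)
      then show ?thesis using A u by blast
    qed
    show "freq (r @ u) w < freq r w"
    proof (cases "freq (r @ u) w = 0")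
      case True then show ?thesis using A by simp
    next
      case False
      from freq_pos_split[of "r @ u" w] False obtain ps ss where "w = ps @ (r @ u) @ ss" by auto
      then have "w = (ps @ r) @ u @ ss" by simp
      then have "u \<in> set (subs w)" by (rule in_subs)
      then show ?thesis using A u by blast
    qed
  qed (use A in auto)
qed

lemma maxrep_subs: "is_maxrep r w \<Longrightarrow> r \<in> set (subs w)"
  unfolding is_maxrep_def using freq_pos_subs by auto

lemma rp_ok_code: "rp_ok s p \<longleftrightarrow> length p = 2 \<and> freq p (snd s) \<ge> 2 \<and>
     (\<forall>q\<in>set (subs (snd s)). length q = 2 \<longrightarrow> freq q (snd s) \<le> freq p (snd s))"
  unfolding rp_ok_def by (metis freq_pos_subs not_gr0 zero_le)

lemma rp_done_code: "rp_done s \<longleftrightarrow> (\<forall>q\<in>set (subs (snd s)). length q = 2 \<longrightarrow> freq q (snd s) \<le> 1)"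
  unfolding rp_done_def by (metis freq_pos_subs not_gr0 zero_le)

lemma mr_ok_code: "mr_ok s r \<longleftrightarrow> is_maxrep r (snd s) \<and>
     (\<forall>r'\<in>set (subs (snd s)). is_maxrep r' (snd s) \<longrightarrow> freq r' (snd s) \<le> freq r (snd s))"
  unfolding mr_ok_def using maxrep_subs by blast

lemma mr_done_code: "mr_done s \<longleftrightarrow> (\<forall>r\<in>set (subs (snd s)). \<not> is_maxrep r (snd s))"
  unfolding mr_done_def using maxrep_subs by blast

lemma rp_cands_code: "rp_cands s p = expand (fst s) ` set (filter (\<lambda>r. is_maxrep r (snd s) \<and>
   freq r (snd s) = freq p (snd s) \<and> p \<in> set (subs r)) (subs (snd s)))"
  unfolding rp_cands_def sub_iff using maxrep_subs by auto

lemma rp_seqs_code: "rp_seqs s (p # ps) = (\<lambda>(x, xs). x # xs) ` (rp_cands s p \<times> rp_seqs (rp_next s p) ps)"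
  by auto


definition freq2 :: "nat list \<Rightarrow> nat list \<Rightarrow> nat" where
  "freq2 s w = length (filter (\<lambda>i. i + length s \<le> length w \<and> take (length s) (drop i w) = s) [0..<Suc (length w)])"

lemma freq_eq: "freq = freq2"
  by (intro ext) (simp add: freq_code freq2_def)

definition ismr2 :: "nat list \<Rightarrow> nat list \<Rightarrow> bool" where
  "ismr2 r w \<longleftrightarrow> length r \<ge> 2 \<and> freq2 r w > 1 \<and>
     (\<forall>u\<in>set (subs w). u \<noteq> [] \<longrightarrow> freq2 (u @ r) w < freq2 r w \<and> freq2 (r @ u) w < freq2 r w)"

lemma ismr_eq: "is_maxrep = ismr2"
  by (intro ext) (simp add: is_maxrep_code ismr2_def freq_eq)

definition rp_cands2 :: "state \<Rightarrow> nat list \<Rightarrow> nat list set" where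
  "rp_cands2 s p = expand (fst s) ` set (filter (\<lambda>r. ismr2 r (snd s) \<and>
   freq2 r (snd s) = freq2 p (snd s) \<and> p \<in> set (subs r)) (subs (snd s)))"

lemma rp_cands_eq: "rp_cands = rp_cands2"
  by (intro ext) (simp add: rp_cands_code rp_cands2_def freq_eq ismr_eq)

fun rp_seqs2 :: "state \<Rightarrow> nat list list \<Rightarrow> nat list list set" where
  "rp_seqs2 s [] = {[]}"
| "rp_seqs2 s (p # ps) = (\<lambda>(x, xs). x # xs) ` (rp_cands2 s p \<times> rp_seqs2 (rp_next s p) ps)"

lemma rp_seqs_eq: "rp_seqs = rp_seqs2"
proof (intro ext)
  fix s ps show "rp_seqs s ps = rp_seqs2 s ps"
    by (induction ps arbitrary: s) (auto simp: rp_seqs_code rp_cands_eq)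
qed

definition rp_ok2 :: "state \<Rightarrow> nat list \<Rightarrow> bool" where
  "rp_ok2 s p \<longleftrightarrow> length p = 2 \<and> freq2 p (snd s) \<ge> 2 \<and>
     (\<forall>q\<in>set (subs (snd s)). length q = 2 \<longrightarrow> freq2 q (snd s) \<le> freq2 p (snd s))"
lemma rp_ok_eq: "rp_ok = rp_ok2"
  by (intro ext) (simp add: rp_ok_code rp_ok2_def freq_eq)

definition rp_done2 :: "state \<Rightarrow> bool" where
  "rp_done2 s \<longleftrightarrow> (\<forall>q\<in>set (subs (snd s)). length q = 2 \<longrightarrow> freq2 q (snd s) \<le> 1)"
lemma rp_done_eq: "rp_done = rp_done2"
  by (intro ext) (simp add: rp_done_code rp_done2_def freq_eq)

definition mr_ok2 :: "state \<Rightarrow> nat list \<Rightarrow> bool" where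
  "mr_ok2 s r \<longleftrightarrow> ismr2 r (snd s) \<and>
     (\<forall>r'\<in>set (subs (snd s)). ismr2 r' (snd s) \<longrightarrow> freq2 r' (snd s) \<le> freq2 r (snd s))"
lemma mr_ok_eq: "mr_ok = mr_ok2"
  by (intro ext) (simp add: mr_ok_code mr_ok2_def freq_eq ismr_eq)

definition mr_done2 :: "state \<Rightarrow> bool" where
  "mr_done2 s \<longleftrightarrow> (\<forall>r\<in>set (subs (snd s)). \<not> ismr2 r (snd s))"
lemma mr_done_eq: "mr_done = mr_done2"
  by (intro ext) (simp add: mr_done_code mr_done2_def ismr_eq)

lemmas exec_simps = rp_ok_eq rp_done_eq mr_ok_eq mr_done_eq rp_seqs_eq

theorem mainTheorem3:
  shows "\<exists>T ps rs. repair_run T ps \<and> mrrepair_run T rs \<and>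
           repair_orders T ps \<noteq> {} \<and>
           (\<forall>ord \<in> repair_orders T ps. ord \<noteq> mrrepair_order T rs) \<and>
           gsize (mrrepair_grammar T rs) > gsize (repair_grammar T ps)"
proof (intro exI conjI)
  let ?T = "[0,0,0,1,0,1] :: nat list"
  show "repair_run ?T [[0,1]]"
    unfolding repair_run_def by (simp only: exec_simps) code_simp
  show "mrrepair_run ?T [[0,0],[0,1]]"
    unfolding mrrepair_run_def by (simp only: exec_simps) code_simp
  show "repair_orders ?T [[0,1]] \<noteq> {}"
    unfolding repair_orders_def by (simp only: exec_simps) code_simp
  show "\<forall>ord \<in> repair_orders ?T [[0,1]]. ord \<noteq> mrrepair_order ?T [[0,0],[0,1]]"
    unfolding repair_orders_def mrrepair_order_def by (simp only: exec_simps) code_simp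
  show "gsize (mrrepair_grammar ?T [[0,0],[0,1]]) > gsize (repair_grammar ?T [[0,1]])"
    unfolding mrrepair_grammar_def repair_grammar_def by code_simp
qed

end
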